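(* Let $R$ be a commutative ring and $I$ an invertible fractional ideal of $R$. If $M_1,\ldots,M_n$ are $R$-submodules of $T(R)$ with $I=\bigcup_{k=1}^n M_k$, then $I=M_k$ for some $k$.
   Context: All rings are commutative with $1\neq 0$. $T(R)$ denotes the total ring of fractions of $R$. A fractional ideal of $R$ is an $R$-submodule $I\subseteq T(R)$ such that $aI\subseteq R$ for some nonzerodivisor $a\in R$; for fractional ideals $I,J$, $IJ$ is the set of finite sums $\sum x_iy_i$ with $x_i\in I$, $y_i\in J$. A fractional ideal $I$ is invertible if $IJ=R$ for some fractional ideal $J$. *)

theory Defs
  imports Main
begin

definition subring_of :: "'a::comm_ring_1 set \<Rightarrow> bool" where
  "subring_of R \<longleftrightarrow> 0 \<in> R \<and> 1 \<in> R \<and> (\<forall>x\<in>R. \<forall>y\<in>R. x + y \<in> R \<and> x - y \<in> R \<and> x * y \<in> R)"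

definition nzd_of :: "'a::comm_ring_1 set \<Rightarrow> 'a \<Rightarrow> bool" where
  "nzd_of R s \<longleftrightarrow> s \<in> R \<and> (\<forall>r\<in>R. s * r = 0 \<longrightarrow> r = 0)"

(* The ambient ring 'a (UNIV) is (a copy of) the total ring of fractions T(R) of R:
   R embeds as a subring, every nonzerodivisor of R is a unit, and every element is r/s
   with s a nonzerodivisor of R. This determines T(R) up to isomorphism over R. *)
definition total_ring_of_fractions :: "'a::comm_ring_1 set \<Rightarrow> bool" where
  "total_ring_of_fractions R \<longleftrightarrow> subring_of R
     \<and> (\<forall>s. nzd_of R s \<longrightarrow> (\<exists>t. s * t = 1))
     \<and> (\<forall>x. \<exists>r\<in>R. \<exists>s. nzd_of R s \<and> x * s = r)"

definition submodule_of :: "'a::comm_ring_1 set \<Rightarrow> 'a set \<Rightarrow> bool" where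
  "submodule_of R M \<longleftrightarrow> 0 \<in> M \<and> (\<forall>x\<in>M. \<forall>y\<in>M. x + y \<in> M) \<and> (\<forall>r\<in>R. \<forall>x\<in>M. r * x \<in> M)"

definition fractional_ideal :: "'a::comm_ring_1 set \<Rightarrow> 'a set \<Rightarrow> bool" where
  "fractional_ideal R I \<longleftrightarrow> submodule_of R I \<and> (\<exists>a. nzd_of R a \<and> (\<forall>x\<in>I. a * x \<in> R))"

definition frac_prod :: "'a::comm_ring_1 set \<Rightarrow> 'a set \<Rightarrow> 'a set" where
  "frac_prod I J = {z. \<exists>n::nat. \<exists>f g. (\<forall>i<n. f i \<in> I \<and> g i \<in> J) \<and> z = (\<Sum>i<n. f i * g i)}"

definition invertible_frac :: "'a::comm_ring_1 set \<Rightarrow> 'a set \<Rightarrow> bool" where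
  "invertible_frac R I \<longleftrightarrow> fractional_ideal R I \<and> (\<exists>J. fractional_ideal R J \<and> frac_prod I J = R)"

end

theory Submission
  imports Defs
begin

definition idl :: "'a::comm_ring_1 set \<Rightarrow> 'a set \<Rightarrow> bool" where
  "idl R P \<longleftrightarrow> P \<subseteq> R \<and> 0 \<in> P \<and> (\<forall>x\<in>P. \<forall>y\<in>P. x + y \<in> P) \<and> (\<forall>r\<in>R. \<forall>x\<in>P. r * x \<in> P)"

definition maxl :: "'a::comm_ring_1 set \<Rightarrow> 'a set \<Rightarrow> bool" where
  "maxl R P \<longleftrightarrow> idl R P \<and> 1 \<notin> P \<and> (\<forall>e\<in>R. e \<notin> P \<longrightarrow> (\<exists>r\<in>R. r * e - 1 \<in> P))"

lemma sub_minus1: "subring_of R \<Longrightarrow> -1 \<in> R"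
  unfolding subring_of_def by (metis diff_0)

lemma idl_minus:
  assumes "subring_of R" "idl R P" "x \<in> P" "y \<in> P" shows "x - y \<in> P"
proof -
  have "(-1) * y \<in> P" using assms sub_minus1[OF assms(1)] unfolding idl_def by blast
  hence "x + (-1) * y \<in> P" using assms unfolding idl_def by blast
  thus ?thesis by simp
qed

lemma idl_mult_right:
  assumes "idl R P" "x \<in> P" "r \<in> R" shows "x * r \<in> P"
  using assms unfolding idl_def by (metis mult.commute)

lemma maxl_prime:
  assumes S: "subring_of R" and M: "maxl R P" and a: "a \<in> R" "a \<notin> P" and b: "b \<in> R" "b \<notin> P"
  shows "a * b \<notin> P"
proof
  assume ab: "a * b \<in> P"
  have I: "idl R P" using M unfolding maxl_def by blast
  obtain r where r: "r \<in> R" "r * a - 1 \<in> P" using M a unfolding maxl_def by blast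
  obtain s where s: "s \<in> R" "s * b - 1 \<in> P" using M b unfolding maxl_def by blast
  have rs: "r * s \<in> R" using S r s unfolding subring_of_def by blast
  have sb: "s * b \<in> R" using S s b unfolding subring_of_def by blast
  have 1: "(r * s) * (a * b) \<in> P" using I rs ab unfolding idl_def by blast
  have 2: "(r * a - 1) * (s * b) \<in> P" using idl_mult_right[OF I r(2) sb] .
  have "(r * s) * (a * b) - (r * a - 1) * (s * b) - (s * b - 1) \<in> P"
    using idl_minus[OF S I] 1 2 s(2) by blast
  moreover have "(r * s) * (a * b) - (r * a - 1) * (s * b) - (s * b - 1) = 1"
    by (simp add: algebra_simps)
  ultimately show False using M unfolding maxl_def by simp
qed

lemma maxl_distinct:
  assumes S: "subring_of R" and P: "maxl R P" and Q: "maxl R Q" and ne: "P \<noteq> Q"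
  shows "\<exists>a\<in>P. a \<notin> Q"
proof (rule ccontr)
  assume "\<not> ?thesis"
  hence sub: "P \<subseteq> Q" by blast
  then obtain b where b: "b \<in> Q" "b \<notin> P" using ne by blast
  have IQ: "idl R Q" using Q unfolding maxl_def by blast
  have bR: "b \<in> R" using IQ b unfolding idl_def by blast
  obtain r where r: "r \<in> R" "r * b - 1 \<in> P" using P bR b unfolding maxl_def by blast
  have "r * b \<in> Q" using IQ r b unfolding idl_def by blast
  hence "r * b - (r * b - 1) \<in> Q" using idl_minus[OF S IQ] r sub by blast
  thus False using Q unfolding maxl_def by simp
qed

lemma sum_in_sub:
  assumes "submodule_of R M" "\<forall>i<(N::nat). h i \<in> M" shows "(\<Sum>i<N. h i) \<in> M"
  using assms(2) proof (induction N)
  case 0 then show ?case using assms(1) unfolding submodule_of_def by simp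
next
  case (Suc N) then show ?case using assms(1) unfolding submodule_of_def by simp
qed

lemma sum_in_subring:
  assumes "subring_of R" "\<forall>i<(N::nat). h i \<in> R" shows "(\<Sum>i<N. h i) \<in> R"
  using assms(2) proof (induction N)
  case 0 then show ?case using assms(1) unfolding subring_of_def by simp
next
  case (Suc N) then show ?case using assms(1) unfolding subring_of_def by simp
qed

lemma sum_in_idl:
  assumes "idl R M" "\<forall>i<(N::nat). h i \<in> M" shows "(\<Sum>i<N. h i) \<in> M"
  using assms(2) proof (induction N)
  case 0 then show ?case using assms(1) unfolding idl_def by simp
next
  case (Suc N) then show ?case using assms(1) unfolding idl_def by simp
qed

lemma fp_single: "x \<in> I \<Longrightarrow> y \<in> J \<Longrightarrow> x * y \<in> frac_prod I J"
  unfolding frac_prod_def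
  by (rule CollectI, rule exI[of _ 1], rule exI[of _ "\<lambda>_. x"], rule exI[of _ "\<lambda>_. y"]) simp

lemma sum_concat: "(\<Sum>i<(N1::nat)+N2. h i) = (\<Sum>i<N1. h i) + (\<Sum>i<N2. h (N1 + i))"
  by (induction N2) (simp_all add: add.assoc)

lemma fp_add:
  assumes "a \<in> frac_prod I J" "b \<in> frac_prod I J" shows "a + b \<in> frac_prod I J"
proof -
  obtain N1 f1 g1 where 1: "\<forall>i<(N1::nat). f1 i \<in> I \<and> g1 i \<in> J" "a = (\<Sum>i<N1. f1 i * g1 i)"
    using assms(1) unfolding frac_prod_def by auto
  obtain N2 f2 g2 where 2: "\<forall>i<(N2::nat). f2 i \<in> I \<and> g2 i \<in> J" "b = (\<Sum>i<N2. f2 i * g2 i)"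
    using assms(2) unfolding frac_prod_def by auto
  define f where "f i = (if i < N1 then f1 i else f2 (i - N1))" for i
  define g where "g i = (if i < N1 then g1 i else g2 (i - N1))" for i
  have "(\<Sum>i<N1+N2. f i * g i) = (\<Sum>i<N1. f i * g i) + (\<Sum>i<N2. f (N1+i) * g (N1+i))"
    by (rule sum_concat)
  also have "\<dots> = a + b" unfolding 1 2 f_def g_def by simp
  finally have e: "a + b = (\<Sum>i<N1+N2. f i * g i)" by simp
  have "\<forall>i<N1+N2. f i \<in> I \<and> g i \<in> J" using 1 2 unfolding f_def g_def
    by (metis add_diff_inverse_nat less_diff_conv2 not_less le_add1 add.commute)
  then show ?thesis unfolding frac_prod_def using e by blast
qed

lemma fp_smult:
  assumes "submodule_of R I" "r \<in> R" "a \<in> frac_prod I J" shows "r * a \<in> frac_prod I J"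
proof -
  obtain N f g where 1: "\<forall>i<(N::nat). f i \<in> I \<and> g i \<in> J" "a = (\<Sum>i<N. f i * g i)"
    using assms(3) unfolding frac_prod_def by auto
  have "r * a = (\<Sum>i<N. (r * f i) * g i)" unfolding 1 by (simp add: sum_distrib_left mult.assoc)
  moreover have "\<forall>i<N. r * f i \<in> I \<and> g i \<in> J" using 1 assms unfolding submodule_of_def by blast
  ultimately show ?thesis unfolding frac_prod_def by (intro CollectI exI[of _ N] exI[of _ "\<lambda>i. r * f i"] exI[of _ g]) auto
qed

lemma fp_zero: "0 \<in> frac_prod I J"
  unfolding frac_prod_def by (rule CollectI, rule exI[of _ 0]) simp

lemma exists_maxl:
  assumes S: "subring_of R" and A: "idl R A" and n1: "1 \<notin> A"
  shows "\<exists>P. maxl R P \<and> A \<subseteq> P"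
proof -
  define \<S> where "\<S> = {P. idl R P \<and> A \<subseteq> P \<and> 1 \<notin> P}"
  have ne: "\<S> \<noteq> {}" using A n1 unfolding \<S>_def by blast
  have "\<exists>M\<in>\<S>. \<forall>X\<in>\<S>. M \<subseteq> X \<longrightarrow> X = M"
  proof (rule subset_Zorn_nonempty[OF ne])
    fix C assume Cne: "C \<noteq> {}" and ch: "subset.chain \<S> C"
    have CS: "C \<subseteq> \<S>" and tot: "\<forall>x\<in>C. \<forall>y\<in>C. x \<subseteq> y \<or> y \<subseteq> x"
      using ch unfolding subset.chain_def by auto
    have "idl R (\<Union>C)" unfolding idl_def
    proof (intro conjI ballI)
      show "\<Union>C \<subseteq> R" using CS unfolding \<S>_def idl_def by blast
      show "0 \<in> \<Union>C" using CS Cne unfolding \<S>_def idl_def by blast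
    next
      fix x y assume "x \<in> \<Union>C" "y \<in> \<Union>C"
      then obtain X Y where XY: "X \<in> C" "Y \<in> C" "x \<in> X" "y \<in> Y" by blast
      show "x + y \<in> \<Union>C"
      proof (cases "X \<subseteq> Y")
        case True then show ?thesis using XY CS unfolding \<S>_def idl_def by blast
      next
        case False then have "Y \<subseteq> X" using tot XY by blast
        then show ?thesis using XY CS unfolding \<S>_def idl_def by blast
      qed
    next
      fix r x assume "r \<in> R" "x \<in> \<Union>C"
      then show "r * x \<in> \<Union>C" using CS unfolding \<S>_def idl_def by blast
    qed
    moreover have "A \<subseteq> \<Union>C" using CS Cne unfolding \<S>_def by blast
    moreover have "1 \<notin> \<Union>C" using CS unfolding \<S>_def by blast
    ultimately show "\<Union>C \<in> \<S>" unfolding \<S>_def by blast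
  qed
  then obtain P where P: "P \<in> \<S>" and mx: "\<forall>X\<in>\<S>. P \<subseteq> X \<longrightarrow> X = P" by blast
  have IP: "idl R P" "A \<subseteq> P" "1 \<notin> P" using P unfolding \<S>_def by auto
  have "\<exists>r\<in>R. r * e - 1 \<in> P" if e: "e \<in> R" "e \<notin> P" for e
  proof (rule ccontr)
    assume nn: "\<not> ?thesis"
    define P' where "P' = {p + r * e | p r. p \<in> P \<and> r \<in> R}"
    have memP': "x \<in> P'" if "p \<in> P" "r \<in> R" "x = p + r * e" for x p r
      unfolding P'_def using that by blast
    have R0: "0 \<in> R" and R1: "1 \<in> R" and Radd: "\<And>x y. x \<in> R \<Longrightarrow> y \<in> R \<Longrightarrow> x + y \<in> R"
      and Rmul: "\<And>x y. x \<in> R \<Longrightarrow> y \<in> R \<Longrightarrow> x * y \<in> R"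
      using S unfolding subring_of_def by auto
    have PR: "P \<subseteq> R" and P0: "0 \<in> P" and Padd: "\<And>x y. x \<in> P \<Longrightarrow> y \<in> P \<Longrightarrow> x + y \<in> P"
      and Pmul: "\<And>r x. r \<in> R \<Longrightarrow> x \<in> P \<Longrightarrow> r * x \<in> P"
      using IP(1) unfolding idl_def by auto
    have "idl R P'" unfolding idl_def
    proof (intro conjI ballI)
      show "P' \<subseteq> R"
      proof
        fix x assume "x \<in> P'"
        then obtain p r where "x = p + r * e" "p \<in> P" "r \<in> R" unfolding P'_def by blast
        then show "x \<in> R" using PR Radd Rmul e(1) by blast
      qed
      show "0 \<in> P'" by (rule memP'[OF P0 R0]) simp
    next
      fix x y assume "x \<in> P'" "y \<in> P'"
      then obtain p r q s where h: "x = p + r * e" "y = q + s * e" "p \<in> P" "q \<in> P" "r \<in> R" "s \<in> R"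
        unfolding P'_def by blast
      have "x + y = (p + q) + (r + s) * e" using h by (simp add: algebra_simps)
      then show "x + y \<in> P'" using memP'[OF Padd[OF h(3) h(4)] Radd[OF h(5) h(6)]] by blast
    next
      fix t x assume t: "t \<in> R" and "x \<in> P'"
      then obtain p r where h: "x = p + r * e" "p \<in> P" "r \<in> R" unfolding P'_def by blast
      have "t * x = t * p + (t * r) * e" using h by (simp add: algebra_simps)
      then show "t * x \<in> P'" using memP'[OF Pmul[OF t h(2)] Rmul[OF t h(3)]] by blast
    qed
    moreover have "P \<subseteq> P'"
    proof
      fix p assume "p \<in> P" then show "p \<in> P'" by (rule memP'[OF _ R0]) simp
    qed
    moreover have "1 \<notin> P'"
    proof
      assume "1 \<in> P'"
      then obtain p r where pr: "1 = p + r * e" "p \<in> P" "r \<in> R" unfolding P'_def by blast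
      have "r * e - 1 = 0 - p" using pr(1) by (simp add: algebra_simps)
      moreover have "0 - p \<in> P" using idl_minus[OF S IP(1) P0 pr(2)] .
      ultimately have "r * e - 1 \<in> P" by simp
      then show False using nn pr(3) by blast
    qed
    ultimately have "P' \<in> \<S>" using IP(2) unfolding \<S>_def by blast
    hence "P' = P" using mx \<open>P \<subseteq> P'\<close> by blast
    moreover have "e \<in> P'" by (rule memP'[OF P0 R1]) simp
    ultimately show False using e by blast
  qed
  then show ?thesis using IP unfolding maxl_def by blast
qed

lemma sep_elem:
  assumes S: "subring_of R" and Q: "maxl R Q" and P: "\<forall>j<(m::nat). maxl R (P j) \<and> P j \<noteq> Q"
  shows "\<exists>c\<in>R. (\<forall>j<m. c \<in> P j) \<and> c \<notin> Q"
  using P proof (induction m)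
  case 0
  have "1 \<in> R" "1 \<notin> Q" using S Q unfolding subring_of_def maxl_def by auto
  then show ?case by auto
next
  case (Suc m)
  then obtain c where c: "c \<in> R" "\<forall>j<m. c \<in> P j" "c \<notin> Q" by auto
  obtain a where a: "a \<in> P m" "a \<notin> Q" using maxl_distinct[OF S _ Q] Suc.prems by blast
  have aR: "a \<in> R" using a Suc.prems unfolding maxl_def idl_def by blast
  have "c * a \<in> R" using S c aR unfolding subring_of_def by blast
  moreover have "\<forall>j<Suc m. c * a \<in> P j"
  proof (intro allI impI)
    fix j assume "j < Suc m"
    show "c * a \<in> P j"
    proof (cases "j < m")
      case True then show ?thesis using c aR Suc.prems idl_mult_right[of R "P j" c a]
        unfolding maxl_def by simp
    next
      case False then have "j = m" using \<open>j < Suc m\<close> by simp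
      then show ?thesis using a c Suc.prems unfolding maxl_def idl_def by auto
    qed
  qed
  moreover have "c * a \<notin> Q" using maxl_prime[OF S Q c(1) c(3) aR a(2)] .
  ultimately show ?case by blast
qed

lemma avoid:
  assumes S: "subring_of R" and IM: "submodule_of R I"
    and prodR: "\<forall>x\<in>I. \<forall>y\<in>J. x * y \<in> R"
    and one: "\<forall>Q. maxl R Q \<longrightarrow> (\<exists>w\<in>I. \<exists>y\<in>J. w * y \<notin> Q)"
    and P: "\<forall>j<(m::nat). maxl R (P j)"
  shows "\<exists>z\<in>I. \<forall>j<m. \<exists>y\<in>J. z * y \<notin> P j"
  using P proof (induction m)
  case 0 then show ?case using IM unfolding submodule_of_def by blast
next
  case (Suc m)
  then obtain z where z: "z \<in> I" "\<forall>j<m. \<exists>y\<in>J. z * y \<notin> P j" by auto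
  have Qm: "maxl R (P m)" using Suc.prems by simp
  show ?case
  proof (cases "(\<exists>y\<in>J. z * y \<notin> P m) \<or> (\<exists>j<m. P j = P m)")
    case True
    then have "\<forall>j<Suc m. \<exists>y\<in>J. z * y \<notin> P j" using z less_Suc_eq by metis
    then show ?thesis using z by blast
  next
    case False
    then have zin: "\<forall>y\<in>J. z * y \<in> P m" and dist: "\<forall>j<m. maxl R (P j) \<and> P j \<noteq> P m"
      using Suc.prems by auto
    obtain c where c: "c \<in> R" "\<forall>j<m. c \<in> P j" "c \<notin> P m" using sep_elem[OF S Qm dist] by blast
    obtain w y0 where w: "w \<in> I" "y0 \<in> J" "w * y0 \<notin> P m" using one Qm by blast
    define z' where "z' = z + c * w"
    have z'I: "z' \<in> I" unfolding z'_def using IM z w c unfolding submodule_of_def by blast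
    have "\<forall>j<Suc m. \<exists>y\<in>J. z' * y \<notin> P j"
    proof (intro allI impI)
      fix j assume "j < Suc m"
      show "\<exists>y\<in>J. z' * y \<notin> P j"
      proof (cases "j < m")
        case True
        then obtain y where y: "y \<in> J" "z * y \<notin> P j" using z by blast
        have Ij: "idl R (P j)" using Suc.prems True unfolding maxl_def by simp
        have wy: "w * y \<in> R" using prodR w y by blast
        have cw: "c * (w * y) \<in> P j" using idl_mult_right[OF Ij c(2)[rule_format, OF True] wy] .
        have "z' * y \<notin> P j"
        proof
          assume "z' * y \<in> P j"
          hence "z' * y - c * (w * y) \<in> P j" using idl_minus[OF S Ij] cw by blast
          moreover have "z' * y - c * (w * y) = z * y" unfolding z'_def by (simp add: algebra_simps)
          ultimately show False using y by simp
        qed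
        then show ?thesis using y by blast
      next
        case False then have jm: "j = m" using \<open>j < Suc m\<close> by simp
        have Im: "idl R (P m)" using Qm unfolding maxl_def by simp
        have wy: "w * y0 \<in> R" using prodR w by blast
        have ncw: "c * (w * y0) \<notin> P m" using maxl_prime[OF S Qm c(1) c(3) wy w(3)] .
        have "z' * y0 \<notin> P m"
        proof
          assume "z' * y0 \<in> P m"
          hence "z' * y0 - z * y0 \<in> P m" using idl_minus[OF S Im] zin w(2) by blast
          moreover have "z' * y0 - z * y0 = c * (w * y0)" unfolding z'_def by (simp add: algebra_simps)
          ultimately show False using ncw by simp
        qed
        then show ?thesis using w jm by blast
      qed
    qed
    then show ?thesis using z'I by blast
  qed
qed

theorem corollary3p2:
  fixes R :: "'a::comm_ring_1 set" and I :: "'a set" and M :: "nat \<Rightarrow> 'a set" and n :: nat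
  assumes "total_ring_of_fractions R"
    and "invertible_frac R I"
    and "\<forall>k\<in>{1..n}. submodule_of R (M k)"
    and "I = (\<Union>k\<in>{1..n}. M k)"
  shows "\<exists>k\<in>{1..n}. I = M k"
proof -
  have S: "subring_of R" using assms(1) unfolding total_ring_of_fractions_def by blast
  have IM: "submodule_of R I" using assms(2) unfolding invertible_frac_def fractional_ideal_def by blast
  obtain J where J: "frac_prod I J = R" using assms(2) unfolding invertible_frac_def by blast
  have prodR: "\<forall>x\<in>I. \<forall>y\<in>J. x * y \<in> R"
  proof (intro ballI)
    fix x y assume "x \<in> I" "y \<in> J"
    then have "x * y \<in> frac_prod I J" by (rule fp_single)
    then show "x * y \<in> R" using J by simp
  qed
  have "1 \<in> R" using S unfolding subring_of_def by blast
  then have "1 \<in> frac_prod I J" using J by simp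
  then obtain N f g where fg: "\<forall>i<(N::nat). f i \<in> I \<and> g i \<in> J" "1 = (\<Sum>i<N. f i * g i)"
    unfolding frac_prod_def by auto
  have MI: "M k \<subseteq> I" if "k \<in> {1..n}" for k using assms(4) that by blast
  show ?thesis
  proof (cases "\<exists>k\<in>{1..n}. 1 \<in> frac_prod (M k) J")
    case True
    then obtain k where k: "k \<in> {1..n}" "1 \<in> frac_prod (M k) J" by blast
    then obtain N' f' g' where fg': "\<forall>i<(N'::nat). f' i \<in> M k \<and> g' i \<in> J" "1 = (\<Sum>i<N'. f' i * g' i)"
      unfolding frac_prod_def by auto
    have Mk: "submodule_of R (M k)" using assms(3) k by blast
    have "I \<subseteq> M k"
    proof
      fix z assume z: "z \<in> I"
      have "z = z * (\<Sum>i<N'. f' i * g' i)" using fg'(2) by simp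
      also have "\<dots> = (\<Sum>i<N'. (g' i * z) * f' i)" by (simp add: sum_distrib_left algebra_simps)
      finally have "z = (\<Sum>i<N'. (g' i * z) * f' i)" .
      moreover have hall: "\<forall>i<N'. (g' i * z) * f' i \<in> M k"
      proof (intro allI impI)
        fix i assume "i < N'"
        then have "z * g' i \<in> R" using prodR z fg'(1) by blast
        then have "g' i * z \<in> R" by (simp add: mult.commute)
        then show "(g' i * z) * f' i \<in> M k" using Mk fg'(1) \<open>i < N'\<close> unfolding submodule_of_def by blast
      qed
      ultimately show "z \<in> M k" using sum_in_sub[OF Mk hall] by simp
    qed
    then show ?thesis using MI k by blast
  next
    case False
    have "\<forall>k\<in>{1..n}. \<exists>P. maxl R P \<and> frac_prod (M k) J \<subseteq> P"
    proof
      fix k assume k: "k \<in> {1..n}"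
      have Mk: "submodule_of R (M k)" using assms(3) k by blast
      have "idl R (frac_prod (M k) J)" unfolding idl_def
      proof (intro conjI ballI)
        show "frac_prod (M k) J \<subseteq> R"
        proof
          fix a assume "a \<in> frac_prod (M k) J"
          then obtain N f g where fg1: "\<forall>i<(N::nat). f i \<in> M k \<and> g i \<in> J" and fg2: "a = (\<Sum>i<N. f i * g i)"
            unfolding frac_prod_def by auto
          have "\<forall>i<N. f i * g i \<in> R" using fg1 prodR MI[OF k] by blast
          then show "a \<in> R" using sum_in_subring[OF S] fg2 by simp
        qed
        show "0 \<in> frac_prod (M k) J" by (rule fp_zero)
      next
        fix x y assume "x \<in> frac_prod (M k) J" "y \<in> frac_prod (M k) J"
        then show "x + y \<in> frac_prod (M k) J" by (rule fp_add)
      next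
        fix r x assume "r \<in> R" "x \<in> frac_prod (M k) J"
        then show "r * x \<in> frac_prod (M k) J" using fp_smult[OF Mk] by blast
      qed
      then show "\<exists>P. maxl R P \<and> frac_prod (M k) J \<subseteq> P" using exists_maxl[OF S] False k by blast
    qed
    from bchoice[OF this] obtain P where P: "\<forall>k\<in>{1..n}. maxl R (P k) \<and> frac_prod (M k) J \<subseteq> P k"
      by blast
    have one: "\<forall>Q. maxl R Q \<longrightarrow> (\<exists>w\<in>I. \<exists>y\<in>J. w * y \<notin> Q)"
    proof (intro allI impI)
      fix Q assume Q: "maxl R Q"
      show "\<exists>w\<in>I. \<exists>y\<in>J. w * y \<notin> Q"
      proof (rule ccontr)
        assume "\<not> ?thesis"
        hence "\<forall>i<N. f i * g i \<in> Q" using fg(1) by blast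
        moreover have "idl R Q" using Q unfolding maxl_def by blast
        ultimately have "(\<Sum>i<N. f i * g i) \<in> Q" using sum_in_idl[of R Q N "\<lambda>i. f i * g i"] by simp
        thus False using fg(2) Q unfolding maxl_def by simp
      qed
    qed
    have "\<forall>j<n. maxl R (P (Suc j))" using P by simp
    from avoid[OF S IM prodR one this]
    obtain z where z: "z \<in> I" "\<forall>j<n. \<exists>y\<in>J. z * y \<notin> P (Suc j)" by blast
    from z(1) obtain k where k: "k \<in> {1..n}" "z \<in> M k" unfolding assms(4) by blast
    have k1: "k - 1 < n" "Suc (k - 1) = k" using k(1) by auto
    from z(2) k1(1) obtain y where y0: "y \<in> J" "z * y \<notin> P (Suc (k - 1))" by blast
    have y: "y \<in> J" "z * y \<notin> P k" using y0 k1(2) by simp_all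
    have "z * y \<in> frac_prod (M k) J" using fp_single[OF k(2) y(1)] .
    moreover have "frac_prod (M k) J \<subseteq> P k" using P k(1) by blast
    ultimately have False using y(2) by blast
    then show ?thesis ..
  qed
qed

end
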